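(* Let $A,B,C$ be agents and $\alpha,\beta,\gamma,\delta\ge0$, $\zeta\in(0,1]$. Use the following notation for interactive processes: $B_C^{\mathrm{dist}}$ is $B$ prompted to act as $C$ and then given the distinguisher prompt with respect to $C$; $C^{\mathrm{dist}}$ is $C$ given the distinguisher prompt; $A_{C}$ is $A$ given the actor prompt to imitate $C$; $B_C$ is $B$ given the actor prompt to imitate $C$; $A_{B,C}$ is $A$ given the actor prompt to imitate $B$ and then receiving (as its first incoming message) the actor prompt to imitate $C$. For a distinguisher process $\Pi$ and interlocutor $Y$ write $\Pr[\Pi\to b\mid Y]$ for the probability that $\Pi$, interacting with $Y$, finally outputs the bit $b$. Assume: (1) $A\geq_\alpha B$ and $B\geq_\beta C$ (GTT comparator). (2) ($\zeta$-Turing-recursivity of $B$ w.r.t. $C$.) In $\mathrm{GTT}(A,B)$ there is an event $R$, independent of the identity of the unknown agent, with $\Pr[R]\ge\zeta$, such that conditioned on $R$ the distinguisher $B$ sends the actor prompt for imitating $C$ and thereafter behaves exactly as $B_C^{\mathrm{dist}}$; thus conditioned on $R$, its output has the law of $B_C^{\mathrm{dist}}$ interacting with $A_{B,C}$ if the unknown agent is $A$, and with $B_C$ if the unknown agent is $B$. (3) (Better than random.) Conditioned on the complement of $R$, $B$ succeeds in $\mathrm{GTT}(A,B)$ with probability at least $1/2$. (4) ($B\geq^{\mathrm{dist,stat}}_\gamma C$, in interactive form.) For every interlocutor $Y$ and $b\in\{0,1\}$, $\bigl|\Pr[B_C^{\mathrm{dist}}\to b\mid Y]-\Pr[C^{\mathrm{dist}}\to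 b\mid Y]\bigr|\le\gamma$. (5) ($A$ is a reasonably intelligent imitator of $C$.) $\Pr[C^{\mathrm{dist}}\to 0\mid A_C]\le \Pr[C^{\mathrm{dist}}\to 0\mid A_{B,C}]+\delta$. Then $A\geq_\epsilon C$ with $\epsilon=\alpha/\zeta+\beta+\gamma+\delta$.
   Context: GTT $\mathrm{GTT}(X,Y)$: a fresh $Y$ is the distinguisher (given the distinguisher prompt asking whether its interlocutor is a $Y$) and interacts with an unknown agent which with probability $1/2$ is a fresh $Y$ and with probability $1/2$ is a fresh $X$ given the actor prompt to imitate $Y$; the distinguisher outputs $1$ ("same as me") or $0$ and succeeds if correct. $p(X,Y)=\Pr[Y\text{ succeeds}]$, and the comparator $X\ge_\epsilon Y$ means $p(X,Y)\le\frac12+\epsilon$. In particular $p(A,C)=\frac12\Pr[C^{\mathrm{dist}}\to0\mid A_C]+\frac12\Pr[C^{\mathrm{dist}}\to1\mid C]$, where $C$ as interlocutor means a fresh instance of $C$ (equivalently $C$ imitating itself), and $p(B,C)=\frac12\Pr[C^{\mathrm{dist}}\to0\mid B_C]+\frac12\Pr[C^{\mathrm{dist}}\to1\mid C]$. *)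

theory Defs
  imports "HOL-Probability.Probability"
begin

text \<open>Agents have type 'a, distinguisher processes type 'p, interlocutors type 'i.
  Pr P Y b = probability that distinguisher process P, interacting with interlocutor Y,
  finally outputs bit b (True = 1 = "same as me", False = 0).
  dprompt Y     : Y given the distinguisher prompt (Y^dprompt)
  act X Y    : X given the actor prompt to imitate Y (X_Y)
  fresh Y    : a fresh instance of Y as interlocutor\<close>

definition output_law :: "('p \<Rightarrow> 'i \<Rightarrow> bool \<Rightarrow> real) \<Rightarrow> bool" where
  "output_law Pr \<longleftrightarrow> (\<forall>P Y. (\<forall>b. 0 \<le> Pr P Y b) \<and> Pr P Y False + Pr P Y True = 1)"

text \<open>Success probability p(X,Y) of the distinguisher Y in GTT(X,Y).\<close>
definition gtt_p ::
  "('p \<Rightarrow> 'i \<Rightarrow> bool \<Rightarrow> real) \<Rightarrow> ('a \<Rightarrow> 'p) \<Rightarrow> ('a \<Rightarrow> 'a \<Rightarrow> 'i) \<Rightarrow> ('a \<Rightarrow> 'i)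
     \<Rightarrow> 'a \<Rightarrow> 'a \<Rightarrow> real" where
  "gtt_p Pr dprompt act fresh X Y =
     1/2 * Pr (dprompt Y) (act X Y) False + 1/2 * Pr (dprompt Y) (fresh Y) True"

definition gtt_geq ::
  "('p \<Rightarrow> 'i \<Rightarrow> bool \<Rightarrow> real) \<Rightarrow> ('a \<Rightarrow> 'p) \<Rightarrow> ('a \<Rightarrow> 'a \<Rightarrow> 'i) \<Rightarrow> ('a \<Rightarrow> 'i)
     \<Rightarrow> 'a \<Rightarrow> real \<Rightarrow> 'a \<Rightarrow> bool" where
  "gtt_geq Pr dprompt act fresh X eps Y \<longleftrightarrow> gtt_p Pr dprompt act fresh X Y \<le> 1/2 + eps"

end

theory Submission
  imports Defs
begin

theorem mainTheorem4:
  fixes Pr :: "'p \<Rightarrow> 'i \<Rightarrow> bool \<Rightarrow> real"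
    and dprompt :: "'a \<Rightarrow> 'p"
    and distAs :: "'a \<Rightarrow> 'a \<Rightarrow> 'p"
    and act :: "'a \<Rightarrow> 'a \<Rightarrow> 'i"
    and act2 :: "'a \<Rightarrow> 'a \<Rightarrow> 'a \<Rightarrow> 'i"
    and fresh :: "'a \<Rightarrow> 'i"
    and A B C :: 'a
    and \<alpha> \<beta> \<gamma> \<delta> \<zeta> :: real
    and M :: "'w measure"
    and S Out1 R :: "'w set"
  assumes law: "output_law Pr"
    and nonneg: "\<alpha> \<ge> 0" "\<beta> \<ge> 0" "\<gamma> \<ge> 0" "\<delta> \<ge> 0"
    and zeta: "0 < \<zeta>" "\<zeta> \<le> 1"
    \<comment> \<open>(1) comparator hypotheses\<close>
    and h1: "gtt_geq Pr dprompt act fresh A \<alpha> B" "gtt_geq Pr dprompt act fresh B \<beta> C"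
    \<comment> \<open>the run of GTT(A,B) as a probability space: S = unknown agent is B,
        Out1 = distinguisher B outputs 1; its marginals are those defining p(A,B)\<close>
    and M: "prob_space M" "S \<in> sets M" "Out1 \<in> sets M" "R \<in> sets M"
    and coin: "measure M S = 1/2"
    and gttAB: "measure M ((space M - S) \<inter> (space M - Out1)) = 1/2 * Pr (dprompt B) (act A B) False"
               "measure M (S \<inter> Out1) = 1/2 * Pr (dprompt B) (fresh B) True"
    \<comment> \<open>(2) zeta-Turing-recursivity of B w.r.t. C\<close>
    and indep: "measure M (R \<inter> S) = measure M R * measure M S"
    and probR: "measure M R \<ge> \<zeta>"
    and condA: "\<And>b. measure M (R \<inter> (space M - S) \<inter> {w \<in> space M. (w \<in> Out1) = b})
                     = measure M (R \<inter> (space M - S)) * Pr (distAs B C) (act2 A B C) b"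
    and condB: "\<And>b. measure M (R \<inter> S \<inter> {w \<in> space M. (w \<in> Out1) = b})
                     = measure M (R \<inter> S) * Pr (distAs B C) (act B C) b"
    \<comment> \<open>(3) better than random on the complement of R\<close>
    and notR: "measure M ((space M - R) \<inter> ((S \<inter> Out1) \<union> ((space M - S) \<inter> (space M - Out1))))
                 \<ge> 1/2 * measure M (space M - R)"
    \<comment> \<open>(4) distinguisher statistical closeness\<close>
    and h4: "\<And>Y b. \<bar>Pr (distAs B C) Y b - Pr (dprompt C) Y b\<bar> \<le> \<gamma>"
    \<comment> \<open>(5) A is a reasonably intelligent imitator of C\<close>
    and h5: "Pr (dprompt C) (act A C) False \<le> Pr (dprompt C) (act2 A B C) False + \<delta>"
  shows "gtt_geq Pr dprompt act fresh A (\<alpha> / \<zeta> + \<beta> + \<gamma> + \<delta>) C"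
proof -
  interpret P: prob_space M by (rule M(1))
  let ?W = "(S \<inter> Out1) \<union> ((space M - S) \<inter> (space M - Out1))"
  define r where "r = measure M R"
  define q0 where "q0 = Pr (distAs B C) (act2 A B C) False"
  define q1 where "q1 = Pr (distAs B C) (act B C) True"
  have SM: "S \<subseteq> space M" "R \<subseteq> space M" "Out1 \<subseteq> space M" using M by (auto dest: sets.sets_into_space)
  have W: "?W \<in> sets M" using M by auto
  have pW: "measure M ?W = measure M (S \<inter> Out1) + measure M ((space M - S) \<inter> (space M - Out1))"
    by (rule P.finite_measure_Union) (use M in auto)
  have split: "measure M ?W = measure M ((space M - R) \<inter> ?W) + measure M (R \<inter> ?W)"
  proof -
    have "?W = ((space M - R) \<inter> ?W) \<union> (R \<inter> ?W)" using SM by auto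
    then have "measure M ?W = measure M (((space M - R) \<inter> ?W) \<union> (R \<inter> ?W))" by simp
    also have "\<dots> = measure M ((space M - R) \<inter> ?W) + measure M (R \<inter> ?W)"
      by (rule P.finite_measure_Union) (use M W in auto)
    finally show ?thesis .
  qed
  have e1: "{w \<in> space M. (w \<in> Out1) = False} = space M - Out1" by auto
  have e2: "{w \<in> space M. (w \<in> Out1) = True} = Out1" using SM by auto
  have RW: "measure M (R \<inter> ?W) = measure M (R \<inter> (space M - S) \<inter> (space M - Out1)) + measure M (R \<inter> S \<inter> Out1)"
  proof -
    have "R \<inter> ?W = (R \<inter> (space M - S) \<inter> (space M - Out1)) \<union> (R \<inter> S \<inter> Out1)" by auto
    then show ?thesis by (simp only:) (rule P.finite_measure_Union, use M in auto)
  qed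
  have cA: "measure M (R \<inter> (space M - S) \<inter> (space M - Out1)) = measure M (R \<inter> (space M - S)) * q0"
    using condA[of False] unfolding e1 q0_def .
  have cB: "measure M (R \<inter> S \<inter> Out1) = measure M (R \<inter> S) * q1"
    using condB[of True] unfolding e2 q1_def .
  have RS: "measure M (R \<inter> S) = r/2" using indep coin r_def by simp
  have RSc: "measure M (R \<inter> (space M - S)) = r/2"
  proof -
    have "R \<inter> (space M - S) = R - (R \<inter> S)" using SM by auto
    then have "measure M (R \<inter> (space M - S)) = measure M R - measure M (R \<inter> S)"
      using M by (simp add: P.finite_measure_Diff)
    then show ?thesis using RS r_def by simp
  qed
  have Rc: "measure M (space M - R) = 1 - r"
    using M by (simp add: P.prob_compl r_def)
  have pAB: "measure M ?W \<le> 1/2 + \<alpha>"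
    using h1(1) pW gttAB unfolding gtt_geq_def gtt_p_def by linarith
  have key: "r/2 * (q0 + q1 - 1) \<le> \<alpha>"
    using pAB split notR RW cA cB RS RSc Rc by (simp add: algebra_simps)
  have rpos: "r \<ge> \<zeta>" using probR r_def by simp
  have q: "(q0 + q1)/2 \<le> 1/2 + \<alpha>/\<zeta>"
  proof (cases "q0 + q1 - 1 \<le> 0")
    case True
    have "\<alpha>/\<zeta> \<ge> 0" using nonneg zeta by simp
    moreover have "(q0 + q1)/2 \<le> 1/2" using True by simp
    ultimately show ?thesis by linarith
  next
    case False
    have "\<zeta> * (q0 + q1 - 1) \<le> r * (q0 + q1 - 1)" using False rpos by (intro mult_right_mono) auto
    then have "\<zeta> * (q0 + q1 - 1) \<le> 2 * \<alpha>" using key by linarith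
    then show ?thesis using zeta by (simp add: field_simps)
  qed
  have lawBC: "Pr (dprompt C) (act B C) False + Pr (dprompt C) (act B C) True = 1"
    using law unfolding output_law_def by blast
  have g1: "Pr (dprompt C) (act2 A B C) False \<le> q0 + \<gamma>" using h4[of "act2 A B C" False] q0_def by linarith
  have g2: "Pr (dprompt C) (act B C) True \<le> q1 + \<gamma>" using h4[of "act B C" True] q1_def by linarith
  have hb: "1/2 * Pr (dprompt C) (act B C) False + 1/2 * Pr (dprompt C) (fresh C) True \<le> 1/2 + \<beta>"
    using h1(2) unfolding gtt_geq_def gtt_p_def .
  obtain t where t: "t = \<alpha>/\<zeta>" by blast
  have "1/2 * Pr (dprompt C) (act A C) False + 1/2 * Pr (dprompt C) (fresh C) True \<le> 1/2 + (t + \<beta> + \<gamma> + \<delta>)"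
    using q g1 g2 hb lawBC h5 nonneg unfolding t[symmetric] by argo
  then show ?thesis unfolding gtt_geq_def gtt_p_def t .
qed

end
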